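(* Let $X$ be a continuous random variable with probability density function $f$ whose support is the interval $(L,R)$, $-\infty\le L<R\le\infty$, with $f$ differentiable on $(L,R)$ and $\log f$ concave on $(L,R)$. Suppose the $p$-mean extends to $p\in(0,1)$, i.e. for $p\in(0,1)$ there is a (differentiable in $p$) $\nu_p\in(L,R)$ satisfying $\int_0^{\nu_p-L} y^{p-1} f(\nu_p-y)\,dy=\int_0^{R-\nu_p} y^{p-1} f(\nu_p+y)\,dy=:H_p$. Let $p\in(0,1)$. If a random variable with density $\frac{1}{H_p}y^{p-1}f(\nu_p+y)\mathbf{1}_{(0,R-\nu_p)}(y)$ exhibits strict stochastic dominance over a random variable with density $\frac{1}{H_p}y^{p-1}f(\nu_p-y)\mathbf{1}_{(0,\nu_p-L)}(y)$, then the function $q\mapsto\nu_q$ is increasing at $p$.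
   Context: For $p\ge 1$ the $p$-mean of a continuous random variable $X$ with $E[|X|^{p-1}]<\infty$ is the unique real $\nu$ with $E[(X-\nu)_+^{p-1}]=E[(\nu-X)_+^{p-1}]$, equivalently $\int_0^{\nu-L} y^{p-1} f(\nu-y)\,dy=\int_0^{R-\nu} y^{p-1} f(\nu+y)\,dy$; the hypothesis is that this defining equation also determines $\nu_p$ for $p\in(0,1)$. A random variable $Y$ with CDF $F_Y$ exhibits strict stochastic dominance over $Z$ with CDF $F_Z$ if $F_Z(x)\ge F_Y(x)$ for all $x$ and $F_Z\not\equiv F_Y$. Values $f(L)$, $f(R)$ are understood as one-sided limits. *)

theory Defs
  imports "HOL-Analysis.Analysis"
begin

definition left_kernel :: "(real \<Rightarrow> real) \<Rightarrow> ereal \<Rightarrow> real \<Rightarrow> real \<Rightarrow> real \<Rightarrow> real" where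
  "left_kernel f L \<nu> p y =
     (if 0 < y \<and> ereal y < ereal \<nu> - L then y powr (p - 1) * f (\<nu> - y) else 0)"

definition right_kernel :: "(real \<Rightarrow> real) \<Rightarrow> ereal \<Rightarrow> real \<Rightarrow> real \<Rightarrow> real \<Rightarrow> real" where
  "right_kernel f R \<nu> p y =
     (if 0 < y \<and> ereal y < R - ereal \<nu> then y powr (p - 1) * f (\<nu> + y) else 0)"

definition cdf_of_density :: "(real \<Rightarrow> real) \<Rightarrow> real \<Rightarrow> real" where
  "cdf_of_density g x = (LINT y:{..x}|lborel. g y)"

definition strictly_dominates :: "(real \<Rightarrow> real) \<Rightarrow> (real \<Rightarrow> real) \<Rightarrow> bool" where
  "strictly_dominates gY gZ \<longleftrightarrow>
     (\<forall>x. cdf_of_density gY x \<le> cdf_of_density gZ x) \<and>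
     (\<exists>x. cdf_of_density gY x \<noteq> cdf_of_density gZ x)"

end

theory Submission
  imports Defs
begin
locale lcd =
  fixes f :: "real \<Rightarrow> real" and L R :: ereal
  assumes LR: "L < R"
    and f_meas: "f \<in> borel_measurable lborel"
    and f_nonneg: "\<And>x. 0 \<le> f x"
    and f_int: "integrable lborel f"
    and f_supp: "\<And>x. 0 < f x \<longleftrightarrow> L < ereal x \<and> ereal x < R"
    and f_diff: "\<And>x. L < ereal x \<Longrightarrow> ereal x < R \<Longrightarrow> f differentiable (at x)"
    and f_logconc: "concave_on {x. L < ereal x \<and> ereal x < R} (\<lambda>x. ln (f x))"
begin

definition S where "S = {x. L < ereal x \<and> ereal x < R}"
definition d where "d x = deriv f x / f x"

lemma S_open: "open S"
  unfolding S_def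
  by (intro open_Collect_conj open_Collect_less continuous_intros) 

lemma S_between: "a \<in> S \<Longrightarrow> b \<in> S \<Longrightarrow> a \<le> x \<Longrightarrow> x \<le> b \<Longrightarrow> x \<in> S"
proof -
  assume a: "a \<in> S" "b \<in> S" "a \<le> x" "x \<le> b"
  have 1: "ereal a \<le> ereal x" "ereal x \<le> ereal b" using a by auto
  have 2: "L < ereal a" "ereal b < R" using a unfolding S_def by auto
  have "L < ereal x" by (rule less_le_trans[OF 2(1) 1(1)])
  moreover have "ereal x < R" by (rule le_less_trans[OF 1(2) 2(2)])
  ultimately show ?thesis unfolding S_def by simp
qed

lemma f_pos: "x \<in> S \<Longrightarrow> 0 < f x" unfolding S_def using f_supp[of x] by simp
lemma f_zero: assumes "x \<notin> S" shows "f x = 0"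
proof -
  have "\<not> 0 < f x" using assms unfolding S_def using f_supp[of x] by simp
  then show ?thesis using f_nonneg[of x] by simp
qed

lemma h_deriv: assumes "x \<in> S" shows "((\<lambda>x. ln (f x)) has_field_derivative d x) (at x)"
proof -
  have "(f has_field_derivative deriv f x) (at x)"
    using f_diff[of x] assms S_def by (simp add: DERIV_deriv_iff_real_differentiable)
  then show ?thesis unfolding d_def using f_pos[OF assms]
    by (auto intro!: derivative_eq_intros simp: field_simps)
qed

lemma tangent: assumes "x \<in> S" "y \<in> S" shows "ln (f y) \<le> ln (f x) + d x * (y - x)"
proof -
  have cv: "convex_on S (\<lambda>x. - ln (f x))" using f_logconc S_def by (simp add: concave_on_def)
  have "connected S" using concave_on_imp_convex[OF f_logconc] S_def convex_connected by auto
  moreover have "x \<in> interior S" using S_open assms by (simp add: interior_open)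
  moreover have "((\<lambda>x. - ln (f x)) has_field_derivative - d x) (at x within S)"
    using has_field_derivative_at_within[OF DERIV_minus[OF h_deriv[OF assms(1)]]] .
  ultimately have "(- ln (f y)) - (- ln (f x)) \<ge> (- d x) * (y - x)"
    using convex_on_imp_above_tangent[OF cv, of x y "- d x"] assms(2) by simp
  then show ?thesis by (simp add: algebra_simps)
qed

lemma d_mono: assumes "x \<in> S" "y \<in> S" "x \<le> y" shows "d y \<le> d x"
proof (cases "x = y")
  case False
  then have "x < y" using assms by simp
  have "ln (f y) \<le> ln (f x) + d x * (y - x)" by (rule tangent[OF assms(1,2)])
  moreover have "ln (f x) \<le> ln (f y) + d y * (x - y)" by (rule tangent[OF assms(2,1)])
  ultimately have "d y * (y - x) \<le> d x * (y - x)" by (simp add: algebra_simps)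
  then show ?thesis using \<open>x < y\<close> by simp
qed simp

lemma f_exp: "x \<in> S \<Longrightarrow> y \<in> S \<Longrightarrow> f y \<le> f x * exp (d x * (y - x))"
proof -
  assume a: "x \<in> S" "y \<in> S"
  have "f y = exp (ln (f y))" using f_pos[OF a(2)] by simp
  also have "\<dots> \<le> exp (ln (f x) + d x * (y - x))" using tangent[OF a] by simp
  also have "\<dots> = f x * exp (d x * (y - x))" using f_pos[OF a(1)] by (simp add: exp_add)
  finally show ?thesis .
qed

lemma f_bound: assumes "x \<in> S" shows "f y \<le> f x * exp (\<bar>d x\<bar> * \<bar>y - x\<bar>)"
proof (cases "y \<in> S")
  case True
  have "f y \<le> f x * exp (d x * (y - x))" using f_exp[OF assms True] .
  also have "\<dots> \<le> f x * exp (\<bar>d x\<bar> * \<bar>y - x\<bar>)"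
    using f_pos[OF assms] by (intro mult_left_mono) (auto simp: abs_mult[symmetric])
  finally show ?thesis .
next
  case False then show ?thesis using f_zero f_pos[OF assms] by simp
qed

lemma lc_ratio: assumes "a \<le> b" "0 \<le> t" shows "f (b + t) * f a \<le> f (a + t) * f b"
proof (cases "a \<in> S \<and> b + t \<in> S")
  case False
  then have "f (b+t) * f a = 0" using f_zero by auto
  moreover have "0 \<le> f (a + t) * f b" using f_nonneg by simp
  ultimately show ?thesis by linarith
next
  case True
  then have aS: "a \<in> S" and btS: "b + t \<in> S" by auto
  have atS: "a + t \<in> S" by (rule S_between[OF aS btS]) (use assms in auto)
  have bS: "b \<in> S" by (rule S_between[OF aS btS]) (use assms in auto)
  have key: "ln (f (b+t)) + ln (f a) \<le> ln (f (a+t)) + ln (f b)"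
  proof (cases "a + t \<le> b")
    case True
    have "ln (f a) \<le> ln (f (a+t)) + d (a+t) * (a - (a+t))" by (rule tangent[OF atS aS])
    moreover have "ln (f (b+t)) \<le> ln (f b) + d b * ((b+t) - b)" by (rule tangent[OF bS btS])
    moreover have "d b \<le> d (a+t)" by (rule d_mono[OF atS bS True])
    then have "d b * t \<le> d (a+t) * t" using assms(2) by (rule mult_right_mono)
    ultimately show ?thesis by (simp add: algebra_simps)
  next
    case False
    have "ln (f a) \<le> ln (f b) + d b * (a - b)" by (rule tangent[OF bS aS])
    moreover have "ln (f (b+t)) \<le> ln (f (a+t)) + d (a+t) * ((b+t) - (a+t))" by (rule tangent[OF atS btS])
    moreover have "d (a+t) \<le> d b" by (rule d_mono[OF bS atS]) (use False in auto)
    then have "d (a+t) * (b - a) \<le> d b * (b - a)" using assms(1) by (intro mult_right_mono) auto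
    ultimately show ?thesis by (simp add: algebra_simps)
  qed
  have "f (b + t) * f a = exp (ln (f (b+t)) + ln (f a))"
    using f_pos[OF btS] f_pos[OF aS] by (simp add: exp_add)
  also have "\<dots> \<le> exp (ln (f (a+t)) + ln (f b))" using key by simp
  also have "\<dots> = f (a + t) * f b" using f_pos[OF atS] f_pos[OF bS] by (simp add: exp_add)
  finally show ?thesis .
qed

lemma incr_lower: assumes "x \<in> S" "x + t \<in> S" "0 \<le> t"
  shows "f (x + t) - f x \<ge> f x * d (x + t) * t"
proof -
  have "ln (f x) \<le> ln (f (x+t)) + d (x+t) * (x - (x+t))" by (rule tangent[OF assms(2,1)])
  then have "ln (f x) + d (x+t) * t \<le> ln (f (x+t))" by simp
  then have "exp (ln (f x) + d (x+t) * t) \<le> f (x+t)" using f_pos[OF assms(2)]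
    by (metis exp_le_cancel_iff exp_ln)
  then have "f x * exp (d (x+t) * t) \<le> f (x+t)" using f_pos[OF assms(1)] by (simp add: exp_add)
  moreover have "f x * (1 + d (x+t) * t) \<le> f x * exp (d (x+t) * t)"
    using f_pos[OF assms(1)] exp_ge_add_one_self[of "d (x+t) * t"] by (intro mult_left_mono) auto
  ultimately show ?thesis by (simp add: algebra_simps)
qed

lemma incr_upper: assumes "x \<in> S" "x + t \<in> S" "0 \<le> t"
  shows "f (x + t) - f x \<le> f (x + t) * d x * t"
proof -
  have "ln (f (x+t)) \<le> ln (f x) + d x * ((x+t) - x)" by (rule tangent[OF assms(1,2)])
  then have "ln (f (x+t)) - d x * t \<le> ln (f x)" by simp
  then have "exp (ln (f (x+t)) - d x * t) \<le> f x" using f_pos[OF assms(1)]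
    by (metis exp_le_cancel_iff exp_ln)
  then have "f (x+t) * exp (- (d x * t)) \<le> f x" using f_pos[OF assms(2)]
    by (simp add: exp_diff exp_minus field_simps)
  moreover have "f (x+t) * (1 - d x * t) \<le> f (x+t) * exp (- (d x * t))"
    using f_pos[OF assms(2)] exp_ge_add_one_self[of "- (d x * t)"] by (intro mult_left_mono) auto
  ultimately show ?thesis by (simp add: algebra_simps)
qed

end

lemma powr_int01:
  fixes a :: real assumes "a > -1"
  shows "integrable lborel (\<lambda>x. indicator {0..1} x * x powr a)"
proof (rule integrableI_nonneg)
  show "(\<lambda>x. indicator {0..1} x * x powr a) \<in> borel_measurable lborel" by measurable
  show "AE x in lborel. 0 \<le> indicator {0..1} x * x powr a" by auto
  have "(\<integral>\<^sup>+ x. ennreal (x powr a) * indicator {0..1} x \<partial>lborel) = ennreal (1 powr (a+1) / (a+1))"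
    by (rule nn_integral_has_integral_lebesgue'[OF _ has_integral_powr_from_0]) (use assms in auto)
  moreover have "(\<integral>\<^sup>+ x. ennreal (indicator {0..1} x * x powr a) \<partial>lborel)
     = (\<integral>\<^sup>+ x. ennreal (x powr a) * indicator {0..1} x \<partial>lborel)"
    by (intro nn_integral_cong) (auto simp: indicator_def)
  ultimately show "(\<integral>\<^sup>+ x. ennreal (indicator {0..1} x * x powr a) \<partial>lborel) < \<infinity>" by simp
qed

lemma ereal_R_iff: "ereal y < R - ereal v \<longleftrightarrow> ereal (v + y) < R"
  by (cases R) auto

lemma ereal_L_iff: "ereal y < ereal v - L \<longleftrightarrow> L < ereal (v - y)"
  by (cases L) auto

context lcd begin

lemma f_borel[measurable]: "f \<in> borel_measurable borel"
  using f_meas by simp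

definition K :: "real \<Rightarrow> real \<Rightarrow> real \<Rightarrow> real \<Rightarrow> real" where
  "K s q v y = (if 0 < y then y powr (q - 1) * f (v + s * y) else 0)"

lemma K_meas[measurable]: "K s q v \<in> borel_measurable lborel"
  unfolding K_def by measurable

lemma K_nonneg: "0 \<le> K s q v y"
  unfolding K_def using f_nonneg by auto

lemma right_kernel_K: "right_kernel f R v q = K 1 q v"
proof
  fix y
  show "right_kernel f R v q y = K 1 q v y"
  proof (cases "0 < y \<and> ereal (v + y) < R")
    case True then show ?thesis unfolding right_kernel_def K_def ereal_R_iff by simp
  next
    case False
    then have "0 < y \<Longrightarrow> f (v + y) = 0" using f_zero S_def by auto
    then show ?thesis unfolding right_kernel_def K_def ereal_R_iff by auto
  qed
qed

lemma left_kernel_K: "left_kernel f L v q = K (-1) q v"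
proof
  fix y
  show "left_kernel f L v q y = K (-1) q v y"
  proof (cases "0 < y \<and> L < ereal (v - y)")
    case True then show ?thesis unfolding left_kernel_def K_def ereal_L_iff by simp
  next
    case False
    then have "0 < y \<Longrightarrow> f (v - y) = 0" using f_zero S_def by auto
    then show ?thesis unfolding left_kernel_def K_def ereal_L_iff by auto
  qed
qed

lemma K_int:
  assumes v: "v \<in> S" and q: "0 < q" "q < 1" and s: "s = 1 \<or> s = -1"
  shows "integrable lborel (K s q v)"
proof -
  define M where "M = f v * exp \<bar>d v\<bar>"
  have fint: "integrable lborel (\<lambda>y. f (v + s * y))"
    using lborel_integrable_real_affine[OF f_int, of s v] s by auto
  have pint: "integrable lborel (\<lambda>x. indicator {0..1} x * x powr (q - 1))"
    using powr_int01[of "q - 1"] q by simp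
  have "integrable lborel (\<lambda>y. M * (indicator {0..1} y * y powr (q - 1)) + f (v + s * y))"
    using fint pint by auto
  then show ?thesis
  proof (rule Bochner_Integration.integrable_bound)
    show "AE y in lborel. norm (K s q v y) \<le> norm (M * (indicator {0..1} y * y powr (q - 1)) + f (v + s * y))"
    proof (rule AE_I2)
      fix y
      have M0: "0 \<le> M" unfolding M_def using f_nonneg by simp
      have "K s q v y \<le> M * (indicator {0..1} y * y powr (q - 1)) + f (v + s * y)"
      proof (cases "0 < y")
        case False then show ?thesis unfolding K_def using M0 f_nonneg
          by (auto simp: indicator_def)
      next
        case True
        show ?thesis
        proof (cases "y \<le> 1")
          case True
          have "f (v + s * y) \<le> f v * exp (\<bar>d v\<bar> * \<bar>(v + s * y) - v\<bar>)" by (rule f_bound[OF v])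
          also have "\<dots> \<le> M" unfolding M_def using f_nonneg[of v] True \<open>0 < y\<close> s
            by (intro mult_left_mono) (auto simp: abs_mult intro!: mult_left_le)
          finally have A: "f (v + s * y) \<le> M" .
          have B: "y powr (q - 1) * f (v + s * y) \<le> y powr (q - 1) * M"
            using A by (intro mult_left_mono) auto
          have "K s q v y = y powr (q-1) * f (v + s * y)" using \<open>0 < y\<close> by (simp add: K_def)
          moreover have "M * (indicator {0..1} y * y powr (q-1)) = y powr (q-1) * M"
            using \<open>0 < y\<close> True by (simp add: indicator_def)
          ultimately show ?thesis using B f_nonneg[of "v + s * y"] by linarith
        next
          case False
          have "y powr (q - 1) \<le> 1" using False q by (intro less_imp_le[OF powr_less_one]) auto
          then have "y powr (q - 1) * f (v + s * y) \<le> f (v + s * y)"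
            using f_nonneg[of "v + s * y"] by (simp add: mult_left_le_one_le)
          then show ?thesis unfolding K_def using \<open>0 < y\<close> False M0
            by (auto simp: indicator_def)
        qed
      qed
      then show "norm (K s q v y) \<le> norm (M * (indicator {0..1} y * y powr (q - 1)) + f (v + s * y))"
        using K_nonneg[of s q v y] by simp
    qed
  qed simp
qed

end

lemma split_shift:
  fixes g :: "real \<Rightarrow> real"
  assumes g: "integrable lborel g"
  shows "integrable lborel (\<lambda>y. indicator {..<a} y * g y + indicator {a..} (c + y) * g (c + y))"
    and "integral\<^sup>L lborel g = (LINT y|lborel. indicator {..<a} y * g y + indicator {a..} (c + y) * g (c + y))"
proof -
  have i1: "integrable lborel (\<lambda>y. indicator {..<a} y * g y)"
    using integrable_mult_indicator[OF _ g] by simp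
  have i2: "integrable lborel (\<lambda>y. indicator {a..} y * g y)"
    using integrable_mult_indicator[OF _ g] by simp
  have i2': "integrable lborel (\<lambda>y. indicator {a..} (c + 1 * y) * g (c + 1 * y))"
    using lborel_integrable_real_affine[OF i2, of 1 c] by simp
  then have i2'': "integrable lborel (\<lambda>y. indicator {a..} (c + y) * g (c + y))" by simp
  show "integrable lborel (\<lambda>y. indicator {..<a} y * g y + indicator {a..} (c + y) * g (c + y))"
    using i1 i2'' by auto
  have "integral\<^sup>L lborel g = (LINT y|lborel. indicator {..<a} y * g y + indicator {a..} y * g y)"
    by (intro Bochner_Integration.integral_cong) (auto simp: indicator_def)
  also have "\<dots> = (LINT y|lborel. indicator {..<a} y * g y) + (LINT y|lborel. indicator {a..} y * g y)"
    using i1 i2 by (rule Bochner_Integration.integral_add)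
  also have "(LINT y|lborel. indicator {a..} y * g y) = \<bar>1\<bar> *\<^sub>R (LINT y|lborel. indicator {a..} (c + 1 * y) * g (c + 1 * y))"
    by (rule lborel_integral_real_affine) simp
  also have "(LINT y|lborel. indicator {..<a} y * g y) + \<bar>1\<bar> *\<^sub>R (LINT y|lborel. indicator {a..} (c + 1 * y) * g (c + 1 * y))
      = (LINT y|lborel. indicator {..<a} y * g y + indicator {a..} (c + y) * g (c + y))"
    using i1 i2'' by (simp add: Bochner_Integration.integral_add)
  finally show "integral\<^sup>L lborel g = (LINT y|lborel. indicator {..<a} y * g y + indicator {a..} (c + y) * g (c + y))" .
qed

lemma powr_exp_mono: "0 < y \<Longrightarrow> y \<le> 1 \<Longrightarrow> p \<le> q \<Longrightarrow> y powr (q - 1) \<le> y powr (p - 1)"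
  for y p q :: real by (rule powr_mono') auto

lemma powr_base_anti: "0 < x \<Longrightarrow> x \<le> y \<Longrightarrow> q \<le> 1 \<Longrightarrow> y powr (q - 1) \<le> x powr (q - 1)"
  for x y q :: real by (rule powr_mono2') auto

lemma powr_le_inv: "0 < a \<Longrightarrow> a \<le> 1 \<Longrightarrow> 0 \<le> q \<Longrightarrow> a powr (q - 1) \<le> 1 / a"
  for a q :: real
proof -
  assume "0 < a" "a \<le> 1" "0 \<le> q"
  then have "a powr (q - 1) \<le> a powr (0 - 1)" by (intro powr_exp_mono) auto
  also have "\<dots> = 1 / a" using \<open>0 < a\<close> by (simp add: powr_neg_one)
  finally show ?thesis .
qed

context lcd begin

definition Phi :: "real \<Rightarrow> real \<Rightarrow> real" where
  "Phi q v = (LINT y|lborel. K 1 q v y) - (LINT y|lborel. K (-1) q v y)"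

lemma single_crossing:
  assumes v: "v \<in> S" "v' \<in> S" "v \<le> v'" and q: "0 < q" "q < 1"
  shows "Phi q v' \<le> (f v' / f v) * Phi q v"
proof -
  define \<rho> where "\<rho> = f v' / f v"
  have fv: "0 < f v" using f_pos[OF v(1)] .
  have r0: "0 \<le> \<rho>" unfolding \<rho>_def using fv f_nonneg[of v'] by simp
  have ip: "integrable lborel (K 1 q w)" and im: "integrable lborel (K (-1) q w)" if "w \<in> S" for w
    using K_int[OF that q] by auto
  have 1: "K 1 q v' y \<le> \<rho> * K 1 q v y" for y
  proof (cases "0 < y")
    case True
    have "f (v + y + (v' - v)) * f v \<le> f (v + (v' - v)) * f (v + y)"
      using lc_ratio[of v "v + y" "v' - v"] True v by simp
    then have "f (v' + y) \<le> \<rho> * f (v + y)" unfolding \<rho>_def using fv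
      by (simp add: field_simps)
    then have "y powr (q - 1) * f (v' + y) \<le> y powr (q - 1) * (\<rho> * f (v + y))"
      by (intro mult_left_mono) auto
    then show ?thesis using True unfolding K_def by (simp add: algebra_simps)
  qed (simp add: K_def)
  have 2: "\<rho> * K (-1) q v y \<le> K (-1) q v' y" for y
  proof (cases "0 < y")
    case True
    have "f (v + (v' - v)) * f (v - y) \<le> f (v - y + (v' - v)) * f v"
      using lc_ratio[of "v - y" v "v' - v"] True v by simp
    then have "\<rho> * f (v - y) \<le> f (v' - y)" unfolding \<rho>_def using fv
      by (simp add: field_simps)
    then have "y powr (q - 1) * (\<rho> * f (v - y)) \<le> y powr (q - 1) * f (v' - y)"
      by (intro mult_left_mono) auto
    then show ?thesis using True unfolding K_def by (simp add: algebra_simps)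
  qed (simp add: K_def)
  have "(LINT y|lborel. K 1 q v' y) \<le> (LINT y|lborel. \<rho> * K 1 q v y)"
    using ip[OF v(1)] ip[OF v(2)] 1 by (intro integral_mono) auto
  moreover have "(LINT y|lborel. \<rho> * K (-1) q v y) \<le> (LINT y|lborel. K (-1) q v' y)"
    using im[OF v(1)] im[OF v(2)] 2 by (intro integral_mono) auto
  ultimately show ?thesis unfolding Phi_def \<rho>_def[symmetric]
    by (simp add: algebra_simps)
qed

end

context lcd begin

lemma claimB:
  assumes ends: "v0 - a \<in> S" "v0 + a + t0 \<in> S"
    and a: "0 < a" "a \<le> 1" and t: "0 \<le> t" "t \<le> t0" "t0 < a"
    and q: "0 < p" "p \<le> q" "q < 1"
    and Mf: "\<And>z. v0 - a \<le> z \<Longrightarrow> z \<le> v0 + a + t0 \<Longrightarrow> f z \<le> Mf"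
    and Dm: "\<And>z. v0 - a \<le> z \<Longrightarrow> z \<le> v0 + a + t0 \<Longrightarrow> \<bar>d z\<bar> \<le> Dm"
  shows "(LINT y|lborel. K 1 q (v0 + t) y) - (LINT y|lborel. K 1 q v0 y)
     \<ge> - (Mf * Dm * t * (LINT y|lborel. indicator {0..1} y * y powr (p - 1)) + Mf / a * t)"
proof -
  have inS: "z \<in> S" if "v0 - a \<le> z" "z \<le> v0 + a + t0" for z using S_between[OF ends that] .
  have v0S: "v0 \<in> S" "v0 + t \<in> S" using inS a t by auto
  have q0: "0 < q" using q by simp
  have i1: "integrable lborel (K 1 q (v0+t))" "integrable lborel (K 1 q v0)"
    using K_int v0S q0 q(3) by auto
  have Mf0: "0 \<le> Mf" using Mf[of v0] f_nonneg[of v0] a t by auto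
  have Dm0: "0 \<le> Dm" using Dm[of v0] a t by auto
  define I0 where "I0 = (LINT y|lborel. indicator {0..1} y * y powr (p - 1))"
  define G where "G y = indicator {..<a} y * K 1 q (v0+t) y + indicator {a..} (-t + y) * K 1 q (v0+t) (-t + y)" for y
  have iG: "integrable lborel G" unfolding G_def by (rule split_shift(1)[OF i1(1)])
  have eG: "(LINT y|lborel. K 1 q (v0+t) y) = integral\<^sup>L lborel G" unfolding G_def by (rule split_shift(2)[OF i1(1)])
  define g where "g y = -(Mf*Dm*t) * (indicator {0..1} y * y powr (p-1)) - (Mf/a) * indicator {a..a+t} y" for y
  have ip: "integrable lborel (\<lambda>y. indicator {0..1} y * y powr (p-1))" using powr_int01[of "p-1"] q by simp
  have ii: "integrable lborel (indicator {a..a+t} :: real \<Rightarrow> real)" using t by simp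
  have ig: "integrable lborel g" unfolding g_def using ip ii by auto
  have intg: "integral\<^sup>L lborel g = -(Mf*Dm*t*I0 + Mf/a*t)"
    unfolding g_def I0_def using ip ii t by (simp add: algebra_simps)
  have pw: "g y \<le> G y - K 1 q v0 y" for y
  proof -
    consider (neg) "y \<le> 0" | (small) "0 < y" "y < a" | (mid) "a \<le> y" "y \<le> a + t" | (big) "a + t < y"
      by linarith
    then show ?thesis
    proof cases
      case neg
      then show ?thesis using a t unfolding G_def g_def K_def by (auto simp: indicator_def)
    next
      case small
      have x1: "v0 + y \<in> S" "v0 + y + t \<in> S" using inS small a t by auto
      have D1: "f (v0 + y + t) - f (v0 + y) \<ge> f (v0 + y) * d (v0 + y + t) * t"
        using incr_lower[OF x1 t(1)] .
      have "\<bar>f (v0 + y) * d (v0 + y + t) * t\<bar> = f (v0 + y) * \<bar>d (v0 + y + t)\<bar> * t"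
        using f_nonneg[of "v0+y"] t by (simp add: abs_mult)
      also have "\<dots> \<le> Mf * Dm * t"
        using Mf[of "v0+y"] Dm[of "v0+y+t"] small a t f_nonneg[of "v0+y"] Dm0
        by (intro mult_right_mono mult_mono) auto
      finally have D2: "f (v0 + y + t) - f (v0 + y) \<ge> -(Mf * Dm * t)" using D1 by linarith
      have e1: "G y - K 1 q v0 y = y powr (q - 1) * (f (v0 + y + t) - f (v0 + y))"
        using small t unfolding G_def K_def by (simp add: indicator_def algebra_simps)
      have "y powr (q - 1) * (-(Mf * Dm * t)) \<le> y powr (q - 1) * (f (v0 + y + t) - f (v0 + y))"
        using D2 by (intro mult_left_mono) auto
      moreover have "y powr (p - 1) * (-(Mf * Dm * t)) \<le> y powr (q - 1) * (-(Mf * Dm * t))"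
        using powr_exp_mono[of y p q] small a q Mf0 Dm0 t
        by (intro mult_right_mono_neg) auto
      moreover have "g y = y powr (p - 1) * (-(Mf * Dm * t))"
        using small a unfolding g_def by (simp add: indicator_def)
      ultimately show ?thesis using e1 by linarith
    next
      case mid
      have G0: "0 \<le> G y" unfolding G_def using K_nonneg by (simp add: indicator_def)
      have y0: "0 < y" using mid a by simp
      have "K 1 q v0 y = y powr (q - 1) * f (v0 + y)" using y0 by (simp add: K_def)
      also have "\<dots> \<le> a powr (q - 1) * Mf"
        using powr_base_anti[of a y q] mid a q Mf[of "v0 + y"] t f_nonneg[of "v0+y"]
        by (intro mult_mono) auto
      also have "\<dots> \<le> 1 / a * Mf" using powr_le_inv[of a q] a q Mf0 by (intro mult_right_mono) auto
      finally have K1: "K 1 q v0 y \<le> Mf / a" by simp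
      have "g y \<le> - (Mf / a)"
        using mid Mf0 Dm0 t unfolding g_def by (auto simp: indicator_def)
      then show ?thesis using G0 K1 by linarith
    next
      case big
      have y0: "0 < y" "0 < y - t" using big a t by auto
      have e1: "G y = (y - t) powr (q - 1) * f (v0 + y)"
        using big a t unfolding G_def K_def by (simp add: indicator_def)
      have "y powr (q - 1) * f (v0 + y) \<le> (y - t) powr (q - 1) * f (v0 + y)"
        using powr_base_anti[of "y - t" y q] y0 t q f_nonneg[of "v0+y"]
        by (intro mult_right_mono) auto
      then have "0 \<le> G y - K 1 q v0 y" using e1 y0 by (simp add: K_def)
      moreover have "g y \<le> 0" using big a Mf0 Dm0 t unfolding g_def
        by (auto simp: indicator_def)
      ultimately show ?thesis by linarith
    qed
  qed
  have "(LINT y|lborel. K 1 q (v0 + t) y) - (LINT y|lborel. K 1 q v0 y) = (LINT y|lborel. G y - K 1 q v0 y)"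
    using eG iG i1(2) by simp
  also have "\<dots> \<ge> integral\<^sup>L lborel g"
    using ig iG i1(2) pw by (intro integral_mono) auto
  finally show ?thesis using intg I0_def by simp
qed


lemma claimA:
  assumes ends: "v0 - a \<in> S" "v0 + a + t0 \<in> S"
    and a: "0 < a" "a \<le> 1" and t: "0 \<le> t" "t \<le> t0" "t0 < a"
    and q: "0 < p" "p \<le> q" "q < 1"
    and Mf: "\<And>z. v0 - a \<le> z \<Longrightarrow> z \<le> v0 + a + t0 \<Longrightarrow> f z \<le> Mf"
    and Dm: "\<And>z. v0 - a \<le> z \<Longrightarrow> z \<le> v0 + a + t0 \<Longrightarrow> \<bar>d z\<bar> \<le> Dm"
  shows "(LINT y|lborel. K (-1) q (v0 + t) y) - (LINT y|lborel. K (-1) q v0 y)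
     \<le> Mf * Dm * t * (LINT y|lborel. indicator {0..1} y * y powr (p - 1)) + Mf / a * t"
proof -
  have inS: "z \<in> S" if "v0 - a \<le> z" "z \<le> v0 + a + t0" for z using S_between[OF ends that] .
  have v0S: "v0 \<in> S" "v0 + t \<in> S" using inS a t by auto
  have q0: "0 < q" using q by simp
  have i1: "integrable lborel (K (-1) q (v0+t))" "integrable lborel (K (-1) q v0)"
    using K_int v0S q0 q(3) by auto
  have Mf0: "0 \<le> Mf" using Mf[of v0] f_nonneg[of v0] a t by auto
  have Dm0: "0 \<le> Dm" using Dm[of v0] a t by auto
  define I0 where "I0 = (LINT y|lborel. indicator {0..1} y * y powr (p - 1))"
  define G where "G y = indicator {..<a} y * K (-1) q (v0+t) y + indicator {a..} (t + y) * K (-1) q (v0+t) (t + y)" for y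
  have iG: "integrable lborel G" unfolding G_def by (rule split_shift(1)[OF i1(1)])
  have eG: "(LINT y|lborel. K (-1) q (v0+t) y) = integral\<^sup>L lborel G" unfolding G_def by (rule split_shift(2)[OF i1(1)])
  define g where "g y = (Mf*Dm*t) * (indicator {0..1} y * y powr (p-1)) + (Mf/a) * indicator {a-t..a} y" for y
  have ip: "integrable lborel (\<lambda>y. indicator {0..1} y * y powr (p-1))" using powr_int01[of "p-1"] q by simp
  have ii: "integrable lborel (indicator {a-t..a} :: real \<Rightarrow> real)" using t by simp
  have ig: "integrable lborel g" unfolding g_def using ip ii by auto
  have intg: "integral\<^sup>L lborel g = Mf*Dm*t*I0 + Mf/a*t"
    unfolding g_def I0_def using ip ii t by (simp add: algebra_simps)
  have g0: "0 \<le> g y" for y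
    unfolding g_def using Mf0 Dm0 t a by (auto simp: indicator_def)
  have T2: "indicator {a..} (t + y) * K (-1) q (v0+t) (t + y) \<le> (Mf/a) * indicator {a-t..a} y"
    if "0 < y" "y < a" for y
  proof (cases "a \<le> t + y")
    case True
    have "indicator {a..} (t + y) * K (-1) q (v0+t) (t + y) = (t + y) powr (q - 1) * f (v0 - y)"
      using True that t unfolding K_def by (simp add: indicator_def algebra_simps)
    also have "\<dots> \<le> a powr (q - 1) * Mf"
      using powr_base_anti[of a "t + y" q] True that a q Mf[of "v0 - y"] t f_nonneg[of "v0 - y"]
      by (intro mult_mono) auto
    also have "\<dots> \<le> 1 / a * Mf" using powr_le_inv[of a q] a q Mf0 by (intro mult_right_mono) auto
    finally show ?thesis using True that by (simp add: indicator_def)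
  next
    case False
    then show ?thesis using Mf0 a by (simp add: indicator_def)
  qed
  have pw: "G y - K (-1) q v0 y \<le> g y" for y
  proof -
    consider (neg) "y \<le> 0" | (small) "0 < y" "y < a" | (ge) "a \<le> y"
      by linarith
    then show ?thesis
    proof cases
      case neg
      then have "G y - K (-1) q v0 y = 0" using a t unfolding G_def K_def by (auto simp: indicator_def)
      then show ?thesis using g0[of y] by simp
    next
      case small
      have x1: "v0 - y \<in> S" "v0 - y + t \<in> S" using inS small a t by auto
      have D1: "f (v0 - y + t) - f (v0 - y) \<le> f (v0 - y + t) * d (v0 - y) * t"
        using incr_upper[OF x1 t(1)] .
      have "f (v0 - y + t) * d (v0 - y) * t \<le> \<bar>f (v0 - y + t) * d (v0 - y) * t\<bar>" by simp
      also have "\<dots> = f (v0 - y + t) * \<bar>d (v0 - y)\<bar> * t"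
        using f_nonneg[of "v0 - y + t"] t by (simp add: abs_mult)
      also have "\<dots> \<le> Mf * Dm * t"
        using Mf[of "v0 - y + t"] Dm[of "v0 - y"] small a t f_nonneg[of "v0 - y + t"] Dm0
        by (intro mult_right_mono mult_mono) auto
      finally have D2: "f (v0 - y + t) - f (v0 - y) \<le> Mf * Dm * t" using D1 by linarith
      have e1: "G y - K (-1) q v0 y = y powr (q - 1) * (f (v0 - y + t) - f (v0 - y))
          + indicator {a..} (t + y) * K (-1) q (v0+t) (t + y)"
        using small t unfolding G_def by (simp add: K_def indicator_def algebra_simps)
      have "y powr (q - 1) * (f (v0 - y + t) - f (v0 - y)) \<le> y powr (q - 1) * (Mf * Dm * t)"
        using D2 by (intro mult_left_mono) auto
      moreover have "y powr (q - 1) * (Mf * Dm * t) \<le> y powr (p - 1) * (Mf * Dm * t)"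
        using powr_exp_mono[of y p q] small a q Mf0 Dm0 t
        by (intro mult_right_mono) auto
      moreover have "g y = y powr (p - 1) * (Mf * Dm * t) + (Mf/a) * indicator {a-t..a} y"
        using small a unfolding g_def by (simp add: indicator_def)
      ultimately show ?thesis using e1 T2[OF small] by linarith
    next
      case ge
      have y0: "0 < y" using ge a by simp
      have e1: "G y = (t + y) powr (q - 1) * f (v0 - y)"
        using ge a t unfolding G_def K_def by (simp add: indicator_def algebra_simps)
      have "(t + y) powr (q - 1) * f (v0 - y) \<le> y powr (q - 1) * f (v0 - y)"
        using powr_base_anti[of y "t + y" q] y0 t q f_nonneg[of "v0 - y"]
        by (intro mult_right_mono) auto
      then have "G y - K (-1) q v0 y \<le> 0" using e1 y0 by (simp add: K_def)
      then show ?thesis using g0[of y] by linarith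
    qed
  qed
  have "(LINT y|lborel. K (-1) q (v0 + t) y) - (LINT y|lborel. K (-1) q v0 y) = (LINT y|lborel. G y - K (-1) q v0 y)"
    using eG iG i1(2) by simp
  also have "\<dots> \<le> integral\<^sup>L lborel g"
    using ig iG i1(2) pw by (intro integral_mono) auto
  finally show ?thesis using intg I0_def by simp
qed

end

lemma inner_powr:
  fixes h y :: real assumes h: "0 < h" and y: "0 < y"
  shows "(\<integral>\<^sup>+s. (if 0 \<le> s \<and> s < y then ennreal (h * s powr (h-1)) else 0) \<partial>lborel) = ennreal (y powr h)"
proof -
  have "((\<lambda>x. x powr (h-1)) has_integral (y powr (h-1+1) / (h-1+1))) {0..y}"
    by (rule has_integral_powr_from_0) (use h y in auto)
  then have "((\<lambda>x. x powr (h-1)) has_integral (y powr h / h)) {0..y}" by simp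
  then have "((\<lambda>x. h * x powr (h-1)) has_integral (h * (y powr h / h))) {0..y}"
    by (rule has_integral_mult_right)
  then have hi: "((\<lambda>x. h * x powr (h-1)) has_integral (y powr h)) {0..y}" using h by simp
  have "(\<integral>\<^sup>+ x. ennreal (h * x powr (h-1)) * indicator {0..y} x \<partial>lborel) = ennreal (y powr h)"
    by (rule nn_integral_has_integral_lebesgue'[OF _ hi]) (use h in auto)
  moreover have "(\<integral>\<^sup>+s. (if 0 \<le> s \<and> s < y then ennreal (h * s powr (h-1)) else 0) \<partial>lborel)
      = (\<integral>\<^sup>+ x. ennreal (h * x powr (h-1)) * indicator {0..y} x \<partial>lborel)"
    by (intro nn_integral_cong_AE eventually_mono[OF AE_lborel_singleton[of y]])
       (auto simp: indicator_def)
  ultimately show ?thesis by simp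
qed

lemma tail_formula:
  fixes w :: "real \<Rightarrow> real" and h :: real
  assumes wm[measurable]: "w \<in> borel_measurable borel" and w0: "\<And>y. 0 \<le> w y"
    and wneg: "\<And>y. y \<le> 0 \<Longrightarrow> w y = 0"
    and h: "0 < h" and wi: "integrable lborel w" and whi: "integrable lborel (\<lambda>y. y powr h * w y)"
  shows "integrable lborel (\<lambda>s. h * s powr (h-1) * indicator {0..} s * (LINT y|lborel. (if s < y then w y else 0)))"
    and "(LINT y|lborel. y powr h * w y) = (LINT s|lborel. h * s powr (h-1) * indicator {0..} s * (LINT y|lborel. (if s < y then w y else 0)))"
proof -
  define T where "T s = (LINT y|lborel. (if s < y then w y else 0))" for s
  have Ti: "integrable lborel (\<lambda>y. if s < y then w y else 0)" for s
    by (rule Bochner_Integration.integrable_bound[OF wi]) (auto simp: w0)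
  have T0: "0 \<le> T s" for s unfolding T_def by (auto intro!: integral_nonneg simp: w0)
  have Tm[measurable]: "T \<in> borel_measurable borel" unfolding T_def
    by measurable
  have hx: "0 \<le> h * s powr (h-1)" for s using h by simp
  define F where "F s = h * s powr (h-1) * indicator {0..} s * T s" for s
  have F0: "0 \<le> F s" for s unfolding F_def using h T0 by (auto simp: indicator_def)
  have Fm: "F \<in> borel_measurable lborel" unfolding F_def by measurable
  have step1: "ennreal (y powr h * w y) = (\<integral>\<^sup>+s. (if 0 \<le> s \<and> s < y then ennreal (h * s powr (h-1) * w y) else 0) \<partial>lborel)" for y
  proof (cases "0 < y")
    case True
    have "(\<integral>\<^sup>+s. (if 0 \<le> s \<and> s < y then ennreal (h * s powr (h-1) * w y) else 0) \<partial>lborel)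
       = (\<integral>\<^sup>+s. (if 0 \<le> s \<and> s < y then ennreal (h * s powr (h-1)) else 0) * ennreal (w y) \<partial>lborel)"
      by (intro nn_integral_cong) (auto simp: ennreal_mult w0 hx)
    also have "\<dots> = (\<integral>\<^sup>+s. (if 0 \<le> s \<and> s < y then ennreal (h * s powr (h-1)) else 0) \<partial>lborel) * ennreal (w y)"
      by (rule nn_integral_multc) measurable
    also have "\<dots> = ennreal (y powr h) * ennreal (w y)" using inner_powr[OF h True] by simp
    finally show ?thesis by (simp add: ennreal_mult w0)
  next
    case False
    then have wy: "w y = 0" using wneg[of y] by simp
    have "(\<lambda>s. if 0 \<le> s \<and> s < y then ennreal (h * s powr (h-1) * w y) else 0) = (\<lambda>s. 0)"
      using wy by (intro ext) simp
    then show ?thesis using wy by simp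
  qed
  have step3: "(\<integral>\<^sup>+y. (if 0 \<le> s \<and> s < y then ennreal (h * s powr (h-1) * w y) else 0) \<partial>lborel) = ennreal (F s)" for s
  proof (cases "0 \<le> s")
    case True
    have "(\<integral>\<^sup>+y. (if 0 \<le> s \<and> s < y then ennreal (h * s powr (h-1) * w y) else 0) \<partial>lborel)
        = (\<integral>\<^sup>+y. ennreal (h * s powr (h-1)) * ennreal (if s < y then w y else 0) \<partial>lborel)"
      using True by (intro nn_integral_cong) (auto simp: ennreal_mult w0 hx)
    also have "\<dots> = ennreal (h * s powr (h-1)) * (\<integral>\<^sup>+y. ennreal (if s < y then w y else 0) \<partial>lborel)"
      by (rule nn_integral_cmult) measurable
    also have "(\<integral>\<^sup>+y. ennreal (if s < y then w y else 0) \<partial>lborel) = ennreal (T s)"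
      unfolding T_def by (rule nn_integral_eq_integral[OF Ti]) (auto simp: w0)
    finally show ?thesis unfolding F_def using True h T0 by (simp add: ennreal_mult)
  next
    case False
    then show ?thesis unfolding F_def by simp
  qed
  have "ennreal (LINT y|lborel. y powr h * w y) = (\<integral>\<^sup>+y. ennreal (y powr h * w y) \<partial>lborel)"
    by (rule nn_integral_eq_integral[OF whi, symmetric]) (auto simp: w0)
  also have "\<dots> = (\<integral>\<^sup>+y. \<integral>\<^sup>+s. (if 0 \<le> s \<and> s < y then ennreal (h * s powr (h-1) * w y) else 0) \<partial>lborel \<partial>lborel)"
    using step1 by simp
  also have "\<dots> = (\<integral>\<^sup>+s. \<integral>\<^sup>+y. (if 0 \<le> s \<and> s < y then ennreal (h * s powr (h-1) * w y) else 0) \<partial>lborel \<partial>lborel)"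
    by (rule lborel_pair.Fubini') measurable
  also have "\<dots> = (\<integral>\<^sup>+s. ennreal (F s) \<partial>lborel)" using step3 by simp
  finally have eq: "(\<integral>\<^sup>+s. ennreal (F s) \<partial>lborel) = ennreal (LINT y|lborel. y powr h * w y)" by simp
  have "integrable lborel F \<and> integral\<^sup>L lborel F = (LINT y|lborel. y powr h * w y)"
    using nn_integral_eq_integrable[OF Fm _ _, of "LINT y|lborel. y powr h * w y"] eq F0
    by (auto intro!: integral_nonneg simp: w0)
  then show "integrable lborel (\<lambda>s. h * s powr (h-1) * indicator {0..} s * (LINT y|lborel. (if s < y then w y else 0)))"
    and "(LINT y|lborel. y powr h * w y) = (LINT s|lborel. h * s powr (h-1) * indicator {0..} s * (LINT y|lborel. (if s < y then w y else 0)))"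
    unfolding F_def T_def by auto
qed

context lcd begin

lemma lip:
  assumes v0: "v0 \<in> S" and p: "0 < p" "p < 1"
  obtains C t0 where "0 < t0" "0 \<le> C"
    "\<And>q t. p \<le> q \<Longrightarrow> q < 1 \<Longrightarrow> 0 \<le> t \<Longrightarrow> t \<le> t0 \<Longrightarrow> Phi q v0 - C * t \<le> Phi q (v0 + t)"
proof -
  obtain e where e: "e > 0" "ball v0 e \<subseteq> S" using S_open v0 openE by blast
  define a where "a = min 1 (e/2)"
  define t0 where "t0 = a / 2"
  have a: "0 < a" "a \<le> 1" "a \<le> e/2" using e unfolding a_def by auto
  have t0: "0 < t0" "t0 < a" using a unfolding t0_def by auto
  have end1: "v0 - a \<in> S" using e a by (intro subsetD[OF e(2)]) (auto simp: dist_real_def)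
  have end2: "v0 + a + t0 \<in> S" using e a unfolding t0_def
    by (intro subsetD[OF e(2)]) (auto simp: dist_real_def)
  define Mf where "Mf = f v0 * exp (\<bar>d v0\<bar> * 2)"
  define Dm where "Dm = \<bar>d (v0 - a)\<bar> + \<bar>d (v0 + a + t0)\<bar>"
  define I0 where "I0 = (LINT y|lborel. indicator {0..1} y * y powr (p - 1))"
  have Mf: "f z \<le> Mf" if "v0 - a \<le> z" "z \<le> v0 + a + t0" for z
  proof -
    have "f z \<le> f v0 * exp (\<bar>d v0\<bar> * \<bar>z - v0\<bar>)" by (rule f_bound[OF v0])
    also have "\<dots> \<le> Mf" unfolding Mf_def using that a t0 f_nonneg[of v0]
      by (intro mult_left_mono) (auto intro!: mult_left_mono)
    finally show ?thesis .
  qed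
  have Dm: "\<bar>d z\<bar> \<le> Dm" if "v0 - a \<le> z" "z \<le> v0 + a + t0" for z
  proof -
    have zS: "z \<in> S" using S_between[OF end1 end2 that] .
    have "d z \<le> d (v0 - a)" by (rule d_mono[OF end1 zS that(1)])
    moreover have "d (v0 + a + t0) \<le> d z" by (rule d_mono[OF zS end2 that(2)])
    ultimately show ?thesis unfolding Dm_def by linarith
  qed
  have I0: "0 \<le> I0" unfolding I0_def by (auto intro!: integral_nonneg simp: indicator_def)
  have Mf0: "0 \<le> Mf" unfolding Mf_def using f_nonneg[of v0] by simp
  have Dm0: "0 \<le> Dm" unfolding Dm_def by simp
  define C where "C = 2 * (Mf * Dm * I0 + Mf / a)"
  have C0: "0 \<le> C" unfolding C_def using Mf0 Dm0 I0 a by auto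
  show ?thesis
  proof (rule that[OF t0(1) C0])
    fix q t assume q: "p \<le> q" "q < 1" and t: "0 \<le> t" "t \<le> t0"
    have B: "(LINT y|lborel. K 1 q (v0 + t) y) - (LINT y|lborel. K 1 q v0 y) \<ge> - (Mf * Dm * t * I0 + Mf / a * t)"
      unfolding I0_def by (rule claimB[OF end1 end2 a(1,2) t t0(2) p(1) q Mf Dm])
    have A: "(LINT y|lborel. K (-1) q (v0 + t) y) - (LINT y|lborel. K (-1) q v0 y) \<le> Mf * Dm * t * I0 + Mf / a * t"
      unfolding I0_def by (rule claimA[OF end1 end2 a(1,2) t t0(2) p(1) q Mf Dm])
    have Ct: "C * t = 2 * (Mf * Dm * t * I0 + Mf / a * t)" unfolding C_def by (simp add: algebra_simps)
    define X where "X = Mf * Dm * t * I0 + Mf / a * t"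
    define B1 where "B1 = (LINT y|lborel. K 1 q (v0 + t) y)"
    define B0 where "B0 = (LINT y|lborel. K 1 q v0 y)"
    define A1 where "A1 = (LINT y|lborel. K (-1) q (v0 + t) y)"
    define A0 where "A0 = (LINT y|lborel. K (-1) q v0 y)"
    have "B1 - B0 \<ge> - X" "A1 - A0 \<le> X" "C * t = 2 * X"
      using A B Ct unfolding X_def B1_def B0_def A1_def A0_def by simp_all
    then have "B0 - A0 - C * t \<le> B1 - A1" by linarith
    then show "Phi q v0 - C * t \<le> Phi q (v0 + t)" unfolding Phi_def B1_def B0_def A1_def A0_def .
  qed
qed

end

lemma powr_lower_min:
  fixes X h :: real assumes "0 < X" "0 < h" "h < 1"
  shows "min 1 (1 / X) \<le> X powr (h - 1)"
proof (cases "X \<le> 1")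
  case True
  have "X powr 0 \<le> X powr (h - 1)" using True assms by (intro powr_mono') auto
  then show ?thesis using assms by simp
next
  case False
  have "X powr (-1) \<le> X powr (h - 1)" using False assms by (intro powr_mono) auto
  then show ?thesis using assms by (simp add: powr_neg_one)
qed

context lcd begin

definition T :: "real \<Rightarrow> real \<Rightarrow> real \<Rightarrow> real \<Rightarrow> real" where
  "T s q v x = (LINT y|lborel. (if x < y then K s q v y else 0))"

lemma K_borel[measurable]: "K s q v \<in> borel_measurable borel"
  using K_meas by simp

lemma K_le0: "y \<le> 0 \<Longrightarrow> K s q v y = 0" by (simp add: K_def)

lemma T_eq:
  assumes "integrable lborel (K s q v)"
  shows "T s q v x = (LINT y|lborel. K s q v y) - (LINT y|lborel. indicator {..x} y * K s q v y)"
proof -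
  have i2: "integrable lborel (\<lambda>y. indicator {..x} y * K s q v y)"
    using integrable_mult_indicator[OF _ assms, of "{..x}"] by simp
  have "T s q v x = (LINT y|lborel. K s q v y - indicator {..x} y * K s q v y)"
    unfolding T_def by (intro Bochner_Integration.integral_cong) (auto simp: indicator_def)
  also have "\<dots> = (LINT y|lborel. K s q v y) - (LINT y|lborel. indicator {..x} y * K s q v y)"
    using assms i2 by simp
  finally show ?thesis .
qed

lemma K_shift:
  assumes "p < q" shows "K s q v y = y powr (q - p) * K s p v y"
  unfolding K_def by (auto simp: powr_add[symmetric])

lemma qbound:
  assumes v0: "v0 \<in> S" and p: "0 < p" "p < 1"
    and eq: "(LINT y|lborel. K (-1) p v0 y) = (LINT y|lborel. K 1 p v0 y)"
    and le: "\<And>x. (LINT y|lborel. indicator {..x} y * K 1 p v0 y) \<le> (LINT y|lborel. indicator {..x} y * K (-1) p v0 y)"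
    and ne: "\<exists>x. (LINT y|lborel. indicator {..x} y * K 1 p v0 y) \<noteq> (LINT y|lborel. indicator {..x} y * K (-1) p v0 y)"
  obtains c1 where "c1 > 0" "\<And>q. p < q \<Longrightarrow> q < 1 \<Longrightarrow> Phi q v0 \<ge> c1 * (q - p)"
proof -
  have ip: "integrable lborel (K 1 p v0)" and im: "integrable lborel (K (-1) p v0)"
    using K_int[OF v0 p] by auto
  have Tge: "T (-1) p v0 x \<le> T 1 p v0 x" for x
    using T_eq[OF ip, of x] T_eq[OF im, of x] eq le[of x] by linarith
  obtain x0 where x0: "(LINT y|lborel. indicator {..x0} y * K 1 p v0 y) \<noteq> (LINT y|lborel. indicator {..x0} y * K (-1) p v0 y)"
    using ne by blast
  define d0 where "d0 = T 1 p v0 x0 - T (-1) p v0 x0"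
  have d0: "0 < d0" unfolding d0_def
    using T_eq[OF ip, of x0] T_eq[OF im, of x0] eq le[of x0] x0 by linarith
  have x0pos: "0 < x0"
  proof (rule ccontr)
    assume "\<not> 0 < x0"
    then have z: "(\<lambda>y. indicator {..x0} y * K s p v0 y) = (\<lambda>y. 0)" for s
      by (auto simp: indicator_def K_le0)
    show False using x0 z[of 1] z[of "-1"] by simp
  qed
  define Mf where "Mf = f v0 * exp (\<bar>d v0\<bar> * (x0 + 1))"
  define Bw where "Bw = x0 powr (p - 1) * Mf"
  have Mf0: "0 \<le> Mf" unfolding Mf_def using f_nonneg[of v0] by simp
  have Bw0: "0 \<le> Bw" unfolding Bw_def using Mf0 by simp
  have Kb: "K 1 p v0 y \<le> Bw" if "x0 \<le> y" "y \<le> x0 + 1" for y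
  proof -
    have y0: "0 < y" using that x0pos by simp
    have "f (v0 + y) \<le> f v0 * exp (\<bar>d v0\<bar> * \<bar>(v0 + y) - v0\<bar>)" by (rule f_bound[OF v0])
    also have "\<dots> \<le> Mf" unfolding Mf_def using that y0 f_nonneg[of v0]
      by (intro mult_left_mono) (auto intro!: mult_left_mono)
    finally have fM: "f (v0 + y) \<le> Mf" .
    have "K 1 p v0 y = y powr (p - 1) * f (v0 + y)" using y0 by (simp add: K_def)
    also have "\<dots> \<le> x0 powr (p - 1) * Mf"
      using powr_base_anti[of x0 y p] that x0pos p fM f_nonneg[of "v0 + y"]
      by (intro mult_mono) auto
    finally show ?thesis unfolding Bw_def .
  qed
  define \<eta> where "\<eta> = min 1 (d0 / (2 * (Bw + 1)))"
  have eta: "0 < \<eta>" "\<eta> \<le> 1" "\<eta> * Bw \<le> d0 / 2"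
  proof -
    show "0 < \<eta>" "\<eta> \<le> 1" unfolding \<eta>_def using d0 Bw0 by auto
    have "\<eta> * Bw \<le> d0 / (2 * (Bw + 1)) * Bw" unfolding \<eta>_def using Bw0 by (intro mult_right_mono) auto
    also have "\<dots> \<le> d0 / 2" using Bw0 d0 by (simp add: field_simps)
    finally show "\<eta> * Bw \<le> d0 / 2" .
  qed
  have Tdiff: "d0 / 2 \<le> T 1 p v0 s - T (-1) p v0 s" if "x0 \<le> s" "s \<le> x0 + \<eta>" for s
  proof -
    have i1: "integrable lborel (\<lambda>y. if x < y then K s' p v0 y else 0)" if "s' = 1 \<or> s' = -1" for x s'
    proof -
      have "integrable lborel (\<lambda>y. indicator {x<..} y *\<^sub>R K s' p v0 y)"
        by (rule integrable_mult_indicator) (use K_int[OF v0 p that] in auto)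
      moreover have "(\<lambda>y. indicator {x<..} y *\<^sub>R K s' p v0 y) = (\<lambda>y. if x < y then K s' p v0 y else 0)"
        by (auto simp: indicator_def)
      ultimately show ?thesis by simp
    qed
    have "T 1 p v0 x0 - T 1 p v0 s = (LINT y|lborel. (if x0 < y then K 1 p v0 y else 0) - (if s < y then K 1 p v0 y else 0))"
      unfolding T_def using i1[of 1] by simp
    also have "\<dots> \<le> (LINT y|lborel. Bw * indicator {x0..s} y)"
    proof (rule integral_mono)
      show "integrable lborel (\<lambda>y. (if x0 < y then K 1 p v0 y else 0) - (if s < y then K 1 p v0 y else 0))"
        using i1[of 1] by simp
      show "integrable lborel (\<lambda>y. Bw * indicator {x0..s} y)" using that by simp
      fix y
      show "(if x0 < y then K 1 p v0 y else 0) - (if s < y then K 1 p v0 y else 0) \<le> Bw * indicator {x0..s} y"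
      proof (cases "x0 < y \<and> y \<le> s")
        case True
        have "K 1 p v0 y \<le> Bw" using Kb[of y] True that eta by simp
        then show ?thesis using True by (simp add: indicator_def)
      next
        case False
        have "(if x0 < y then K 1 p v0 y else 0) - (if s < y then K 1 p v0 y else 0) = 0"
          using False that by auto
        moreover have "0 \<le> Bw * indicator {x0..s} y" using Bw0 by simp
        ultimately show ?thesis by simp
      qed
    qed
    also have "\<dots> = Bw * (s - x0)" using that by simp
    also have "\<dots> \<le> Bw * \<eta>" using that Bw0 by (intro mult_left_mono) auto
    finally have 1: "T 1 p v0 x0 - T 1 p v0 s \<le> d0 / 2" using eta by (simp add: mult.commute)
    have 2: "T (-1) p v0 s \<le> T (-1) p v0 x0"
      unfolding T_def
    proof (rule integral_mono)
      show "integrable lborel (\<lambda>y. if s < y then K (-1) p v0 y else 0)" using i1[of "-1"] by simp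
      show "integrable lborel (\<lambda>y. if x0 < y then K (-1) p v0 y else 0)" using i1[of "-1"] by simp
      fix y
      show "(if s < y then K (-1) p v0 y else 0) \<le> (if x0 < y then K (-1) p v0 y else 0)"
        using that K_nonneg[of "-1" p v0 y] by auto
    qed
    show ?thesis using 1 2 d0_def by linarith
  qed
  define m where "m = min 1 (1 / (x0 + \<eta>))"
  have m0: "0 < m" unfolding m_def using x0pos eta by auto
  define c1 where "c1 = m * (d0 / 2) * \<eta>"
  have c1: "0 < c1" unfolding c1_def using m0 d0 eta by auto
  show ?thesis
  proof (rule that[OF c1])
    fix q assume q: "p < q" "q < 1"
    define h where "h = q - p"
    have h: "0 < h" "h < 1" using q p unfolding h_def by auto
    have eqK: "K s' q v0 = (\<lambda>y. y powr h * K s' p v0 y)" for s'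
      by (rule ext) (simp add: K_shift[OF q(1)] h_def)
    have tf: "integrable lborel (\<lambda>s. h * s powr (h-1) * indicator {0..} s * (LINT y|lborel. (if s < y then K s' p v0 y else 0)))"
      "(LINT y|lborel. y powr h * K s' p v0 y) = (LINT s|lborel. h * s powr (h-1) * indicator {0..} s * (LINT y|lborel. (if s < y then K s' p v0 y else 0)))"
      if "s' = 1 \<or> s' = -1" for s'
    proof -
      have wi: "integrable lborel (K s' p v0)" using K_int[OF v0 p that] .
      have "integrable lborel (K s' q v0)" using K_int[OF v0 _ q(2) that] p q by simp
      then have whi: "integrable lborel (\<lambda>y. y powr h * K s' p v0 y)"
        using eqK[of s'] by simp
      show "integrable lborel (\<lambda>s. h * s powr (h-1) * indicator {0..} s * (LINT y|lborel. (if s < y then K s' p v0 y else 0)))"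
        by (rule tail_formula(1)[OF K_borel K_nonneg K_le0 h(1) wi whi])
      show "(LINT y|lborel. y powr h * K s' p v0 y) = (LINT s|lborel. h * s powr (h-1) * indicator {0..} s * (LINT y|lborel. (if s < y then K s' p v0 y else 0)))"
        by (rule tail_formula(2)[OF K_borel K_nonneg K_le0 h(1) wi whi])
    qed
    define F where "F s' s = h * s powr (h-1) * indicator {0..} s * T s' p v0 s" for s' s
    have Fi: "integrable lborel (F 1)" "integrable lborel (F (-1))"
      using tf(1)[of 1] tf(1)[of "-1"] unfolding F_def T_def by auto
    have KF: "(LINT y|lborel. K s' q v0 y) = integral\<^sup>L lborel (F s')" if "s' = 1 \<or> s' = -1" for s'
    proof -
      have "(LINT y|lborel. K s' q v0 y) = (LINT y|lborel. y powr h * K s' p v0 y)"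
        using eqK[of s'] by simp
      also have "\<dots> = integral\<^sup>L lborel (F s')" using tf(2)[OF that] unfolding F_def T_def by simp
      finally show ?thesis .
    qed
    have "Phi q v0 = (LINT s|lborel. F 1 s - F (-1) s)"
      unfolding Phi_def using KF[of 1] KF[of "-1"] Fi by simp
    also have "\<dots> \<ge> (LINT s|lborel. (h * c1 / \<eta>) * indicator {x0..x0+\<eta>} s)"
    proof (rule integral_mono)
      show "integrable lborel (\<lambda>s. F 1 s - F (-1) s)" using Fi by simp
      show "integrable lborel (\<lambda>s. (h * c1 / \<eta>) * indicator {x0..x0+\<eta>} s)" using eta by simp
      fix s
      show "(h * c1 / \<eta>) * indicator {x0..x0+\<eta>} s \<le> F 1 s - F (-1) s"
      proof (cases "x0 \<le> s \<and> s \<le> x0 + \<eta>")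
        case True
        have s0: "0 < s" using True x0pos by simp
        have "m \<le> (x0 + \<eta>) powr (h - 1)" unfolding m_def
          by (rule powr_lower_min) (use x0pos eta h in auto)
        also have "\<dots> \<le> s powr (h - 1)" using True s0 h by (intro powr_base_anti) auto
        finally have ms: "m \<le> s powr (h - 1)" .
        have "h * c1 / \<eta> = h * m * (d0 / 2)" unfolding c1_def using eta by simp
        also have "\<dots> \<le> h * s powr (h - 1) * (T 1 p v0 s - T (-1) p v0 s)"
          using ms Tdiff[of s] True h d0 m0 by (intro mult_mono mult_left_mono) auto
        also have "\<dots> = F 1 s - F (-1) s" unfolding F_def using s0 by (simp add: algebra_simps)
        finally show ?thesis using True by simp
      next
        case False
        have "F 1 s - F (-1) s = (h * s powr (h - 1) * indicator {0..} s) * (T 1 p v0 s - T (-1) p v0 s)"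
          unfolding F_def by (simp add: algebra_simps)
        moreover have "0 \<le> h * s powr (h - 1) * indicator {0..} s" using h by (simp add: indicator_def)
        moreover have "0 \<le> T 1 p v0 s - T (-1) p v0 s" using Tge[of s] by simp
        ultimately have "0 \<le> F 1 s - F (-1) s" by simp
        then show ?thesis using False by simp
      qed
    qed
    also have "(LINT s|lborel. (h * c1 / \<eta>) * indicator {x0..x0+\<eta>} s) = h * c1"
      using eta by simp
    finally show "c1 * (q - p) \<le> Phi q v0" unfolding h_def by (simp add: mult.commute)
  qed
qed

end

theorem lemma3:
  fixes f :: "real \<Rightarrow> real" and L R :: ereal and \<nu> :: "real \<Rightarrow> real" and p :: real
  assumes LR: "L < R"
    and f_meas: "f \<in> borel_measurable lborel"
    and f_nonneg: "\<And>x. 0 \<le> f x"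
    and f_int: "integrable lborel f"
    and f_prob: "(LINT x|lborel. f x) = 1"
    and f_supp: "\<And>x. 0 < f x \<longleftrightarrow> L < ereal x \<and> ereal x < R"
    and f_diff: "\<And>x. L < ereal x \<Longrightarrow> ereal x < R \<Longrightarrow> f differentiable (at x)"
    and f_logconc: "concave_on {x. L < ereal x \<and> ereal x < R} (\<lambda>x. ln (f x))"
    and nu_range: "\<And>q. 0 < q \<Longrightarrow> q < 1 \<Longrightarrow> L < ereal (\<nu> q) \<and> ereal (\<nu> q) < R"
    and nu_diff: "\<And>q. 0 < q \<Longrightarrow> q < 1 \<Longrightarrow> \<nu> differentiable (at q)"
    and nu_int_left: "\<And>q. 0 < q \<Longrightarrow> q < 1 \<Longrightarrow> integrable lborel (left_kernel f L (\<nu> q) q)"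
    and nu_int_right: "\<And>q. 0 < q \<Longrightarrow> q < 1 \<Longrightarrow> integrable lborel (right_kernel f R (\<nu> q) q)"
    and nu_eq: "\<And>q. 0 < q \<Longrightarrow> q < 1 \<Longrightarrow>
        (LINT y|lborel. left_kernel f L (\<nu> q) q y) = (LINT y|lborel. right_kernel f R (\<nu> q) q y)"
    and p: "0 < p" "p < 1"
    and dom: "strictly_dominates
        (\<lambda>y. right_kernel f R (\<nu> p) p y / (LINT t|lborel. right_kernel f R (\<nu> p) p t))
        (\<lambda>y. left_kernel f L (\<nu> p) p y / (LINT t|lborel. right_kernel f R (\<nu> p) p t))"
  shows "deriv \<nu> p > 0"
proof -
  interpret lcd f L R
    using LR f_meas f_nonneg f_int f_supp f_diff f_logconc by unfold_locales
  define v0 where "v0 = \<nu> p"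
  have nuS: "\<nu> q \<in> S" if "0 < q" "q < 1" for q
    using nu_range[OF that] unfolding S_def by simp
  have v0S: "v0 \<in> S" unfolding v0_def using nuS[OF p] .
  have Phi0: "Phi q (\<nu> q) = 0" if "0 < q" "q < 1" for q
    using nu_eq[OF that] unfolding Phi_def left_kernel_K right_kernel_K by simp
  define H where "H = (LINT t|lborel. K 1 p v0 t)"
  define Cp where "Cp x = (LINT y|lborel. indicator {..x} y * K 1 p v0 y)" for x
  define Cm where "Cm x = (LINT y|lborel. indicator {..x} y * K (-1) p v0 y)" for x
  have cdf: "cdf_of_density (\<lambda>y. K s p v0 y / H) x = (LINT y|lborel. indicator {..x} y * K s p v0 y) / H" for s x
  proof -
    have "cdf_of_density (\<lambda>y. K s p v0 y / H) x = (LINT y|lborel. (indicator {..x} y * K s p v0 y) / H)"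
      unfolding cdf_of_density_def set_lebesgue_integral_def by simp
    also have "\<dots> = (LINT y|lborel. indicator {..x} y * K s p v0 y) / H" by simp
    finally show ?thesis .
  qed
  have dom': "(\<forall>x. Cp x / H \<le> Cm x / H) \<and> (\<exists>x. Cp x / H \<noteq> Cm x / H)"
    using dom unfolding strictly_dominates_def left_kernel_K right_kernel_K v0_def[symmetric]
      H_def[symmetric] cdf Cp_def Cm_def by simp
  have H0: "0 \<le> H" unfolding H_def by (auto intro!: integral_nonneg simp: K_nonneg)
  have Hne: "H \<noteq> 0" using dom' by auto
  have Hpos: "0 < H" using H0 Hne by simp
  have le: "Cp x \<le> Cm x" for x
  proof -
    have "Cp x / H \<le> Cm x / H" using dom' by simp
    then show ?thesis using Hpos by (simp add: divide_le_cancel)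
  qed
  have ne: "\<exists>x. Cp x \<noteq> Cm x" using dom' by auto
  have eq: "(LINT y|lborel. K (-1) p v0 y) = (LINT y|lborel. K 1 p v0 y)"
    using Phi0[OF p] unfolding Phi_def v0_def by simp
  obtain c1 where c1: "c1 > 0" "\<And>q. p < q \<Longrightarrow> q < 1 \<Longrightarrow> Phi q v0 \<ge> c1 * (q - p)"
  proof -
    have le': "\<And>x. (LINT y|lborel. indicator {..x} y * K 1 p v0 y) \<le> (LINT y|lborel. indicator {..x} y * K (-1) p v0 y)"
      using le unfolding Cp_def Cm_def .
    have ne': "\<exists>x. (LINT y|lborel. indicator {..x} y * K 1 p v0 y) \<noteq> (LINT y|lborel. indicator {..x} y * K (-1) p v0 y)"
      using ne unfolding Cp_def Cm_def .
    show ?thesis by (rule qbound[OF v0S p eq le' ne']) (rule that)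
  qed
  obtain t0 C where Ct: "0 < t0" "0 \<le> C"
    "\<And>q t. p \<le> q \<Longrightarrow> q < 1 \<Longrightarrow> 0 \<le> t \<Longrightarrow> t \<le> t0 \<Longrightarrow> Phi q v0 - C * t \<le> Phi q (v0 + t)"
    by (rule lip[OF v0S p]) blast
  obtain e where e: "e > 0" "ball v0 e \<subseteq> S" using S_open v0S openE by blast
  define t1 where "t1 = min t0 (e/2)"
  have t1: "0 < t1" "t1 \<le> t0" "t1 < e" using Ct e unfolding t1_def by auto
  define \<kappa> where "\<kappa> = c1 / (2 * (C + 1))"
  have kap: "0 < \<kappa>" unfolding \<kappa>_def using c1 Ct by simp
  have Ck: "C * \<kappa> \<le> c1 / 2"
  proof -
    have "C * \<kappa> = (c1 / 2) * (C / (C + 1))" unfolding \<kappa>_def by (simp add: field_simps)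
    also have "\<dots> \<le> (c1 / 2) * 1" using c1 Ct by (intro mult_left_mono) auto
    finally show ?thesis by simp
  qed
  define b where "b = min 1 (p + t1 / \<kappa>)"
  have b: "p < b" unfolding b_def using p t1 kap by auto
  have key: "\<kappa> * (q - p) \<le> \<nu> q - \<nu> p" if q: "p < q" "q < b" for q
  proof -
    define h where "h = q - p"
    have h: "0 < h" using q unfolding h_def by simp
    have q1: "q < 1" using q unfolding b_def by simp
    define ts where "ts = \<kappa> * h"
    have ts: "0 < ts" "ts \<le> t1"
    proof -
      show "0 < ts" unfolding ts_def using kap h by simp
      have "h < t1 / \<kappa>" using q unfolding b_def h_def by simp
      then have "\<kappa> * h < t1" using kap by (simp add: field_simps)
      then show "ts \<le> t1" unfolding ts_def by simp
    qed
    have tsS: "v0 + ts \<in> S" using e ts t1 by (intro subsetD[OF e(2)]) (auto simp: dist_real_def)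
    have "Phi q v0 - C * ts \<le> Phi q (v0 + ts)" using Ct(3)[of q ts] q q1 ts t1 by simp
    moreover have "c1 * h \<le> Phi q v0" using c1(2)[of q] q q1 unfolding h_def by simp
    moreover have "C * ts \<le> c1 / 2 * h"
    proof -
      have "C * ts = (C * \<kappa>) * h" unfolding ts_def by (simp add: mult.assoc)
      also have "\<dots> \<le> c1 / 2 * h" using Ck h by (intro mult_right_mono) auto
      finally show ?thesis .
    qed
    moreover have "0 < c1 / 2 * h" using c1 h by simp
    moreover have "c1 * h = 2 * (c1 / 2 * h)" by simp
    ultimately have pos: "0 < Phi q (v0 + ts)" by linarith
    have "v0 + ts \<le> \<nu> q"
    proof (rule ccontr)
      assume "\<not> v0 + ts \<le> \<nu> q"
      then have lenq: "\<nu> q \<le> v0 + ts" by simp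
      have nq: "\<nu> q \<in> S" using nuS[of q] q p q1 by simp
      have q0: "0 < q" using q p by simp
      from single_crossing[OF nq tsS lenq q0 q1]
      have "Phi q (v0 + ts) \<le> (f (v0 + ts) / f (\<nu> q)) * Phi q (\<nu> q)" by simp
      also have "\<dots> = 0" using Phi0[of q] q p q1 by simp
      finally show False using pos by simp
    qed
    then show ?thesis unfolding ts_def h_def v0_def by simp
  qed
  have der: "(\<nu> has_field_derivative deriv \<nu> p) (at p)"
    using nu_diff[OF p] by (simp add: DERIV_deriv_iff_real_differentiable)
  then have "((\<lambda>y. (\<nu> y - \<nu> p) / (y - p)) \<longlongrightarrow> deriv \<nu> p) (at p)"
    by (simp add: has_field_derivative_iff)
  then have lim: "((\<lambda>y. (\<nu> y - \<nu> p) / (y - p)) \<longlongrightarrow> deriv \<nu> p) (at_right p)"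
    by (simp add: filterlim_at_split)
  have ev: "eventually (\<lambda>y. \<kappa> \<le> (\<nu> y - \<nu> p) / (y - p)) (at_right p)"
    unfolding eventually_at_right_field
  proof (intro exI[of _ b] conjI allI impI)
    show "p < b" by (rule b)
    fix y assume y: "p < y" "y < b"
    then show "\<kappa> \<le> (\<nu> y - \<nu> p) / (y - p)" using key[OF y] by (simp add: le_divide_eq)
  qed
  have "\<kappa> \<le> deriv \<nu> p"
    by (rule tendsto_lowerbound[OF lim ev]) simp
  then show ?thesis using kap by simp
qed

end
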